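(* Let $G$ be a finite simple connected graph and $G^*$ its twin graph. If $\beta(G^* )=n(G^* )-t$ for some positive integer $t$, then $\beta(G)\le n(G)-t$.
   Context: $n(X)$ is the number of vertices of $X$. For an ordered set $W=\{w_1,\dots,w_k\}$ of vertices of a connected graph $X$, $r(v|W)=(d(v,w_1),\dots,d(v,w_k))$ with $d$ the shortest-path distance; $W$ is resolving if distinct vertices have distinct vectors, and $\beta(X)$ is the minimum size of a resolving set. Two distinct vertices $u,v$ of $G$ are twins if $N(v)\setminus\{u\}=N(u)\setminus\{v\}$; $u\equiv v$ iff $u=v$ or they are twins, an equivalence relation with classes $v^*$. The twin graph $G^*$ has vertex set $\{v^*:v\in V(G)\}$ and $u^*v^*\in E(G^* )$ iff $uv\in E(G)$ (well defined). *)

theory Defs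
  imports Main
begin

definition simple_graph :: "'a set \<Rightarrow> ('a \<Rightarrow> 'a \<Rightarrow> bool) \<Rightarrow> bool" where
  "simple_graph V E \<longleftrightarrow> finite V \<and> (\<forall>u v. E u v \<longrightarrow> u \<in> V \<and> v \<in> V)
     \<and> (\<forall>u v. E u v \<longrightarrow> E v u) \<and> (\<forall>u. \<not> E u u)"

fun walk :: "('a \<Rightarrow> 'a \<Rightarrow> bool) \<Rightarrow> 'a list \<Rightarrow> bool" where
  "walk E [] = True"
| "walk E [x] = True"
| "walk E (x # y # xs) = (E x y \<and> walk E (y # xs))"

definition walk_betw :: "'a set \<Rightarrow> ('a \<Rightarrow> 'a \<Rightarrow> bool) \<Rightarrow> 'a \<Rightarrow> 'a list \<Rightarrow> 'a \<Rightarrow> bool" where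
  "walk_betw V E u xs v \<longleftrightarrow> xs \<noteq> [] \<and> hd xs = u \<and> last xs = v \<and> set xs \<subseteq> V \<and> walk E xs"

definition connected_graph :: "'a set \<Rightarrow> ('a \<Rightarrow> 'a \<Rightarrow> bool) \<Rightarrow> bool" where
  "connected_graph V E \<longleftrightarrow> V \<noteq> {} \<and> (\<forall>u\<in>V. \<forall>v\<in>V. \<exists>xs. walk_betw V E u xs v)"

definition gdist :: "'a set \<Rightarrow> ('a \<Rightarrow> 'a \<Rightarrow> bool) \<Rightarrow> 'a \<Rightarrow> 'a \<Rightarrow> nat" where
  "gdist V E u v = (LEAST n. \<exists>xs. walk_betw V E u xs v \<and> length xs = Suc n)"

definition resolving :: "'a set \<Rightarrow> ('a \<Rightarrow> 'a \<Rightarrow> bool) \<Rightarrow> 'a set \<Rightarrow> bool" where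
  "resolving V E W \<longleftrightarrow> W \<subseteq> V \<and>
     (\<forall>u\<in>V. \<forall>v\<in>V. (\<forall>w\<in>W. gdist V E u w = gdist V E v w) \<longrightarrow> u = v)"

definition metric_dim :: "'a set \<Rightarrow> ('a \<Rightarrow> 'a \<Rightarrow> bool) \<Rightarrow> nat" where
  "metric_dim V E = (LEAST k. \<exists>W. resolving V E W \<and> card W = k)"

definition twins :: "'a set \<Rightarrow> ('a \<Rightarrow> 'a \<Rightarrow> bool) \<Rightarrow> 'a \<Rightarrow> 'a \<Rightarrow> bool" where
  "twins V E u v \<longleftrightarrow> u \<noteq> v \<and> {w\<in>V. E v w} - {u} = {w\<in>V. E u w} - {v}"

definition twin_class :: "'a set \<Rightarrow> ('a \<Rightarrow> 'a \<Rightarrow> bool) \<Rightarrow> 'a \<Rightarrow> 'a set" where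
  "twin_class V E v = {u\<in>V. u = v \<or> twins V E u v}"

definition twin_vertices :: "'a set \<Rightarrow> ('a \<Rightarrow> 'a \<Rightarrow> bool) \<Rightarrow> 'a set set" where
  "twin_vertices V E = twin_class V E ` V"

text \<open>Edges of the twin graph: classes u*, v* are adjacent iff uv is an edge of G
(well defined by twin-ness); we keep the twin graph simple (no loops).\<close>
definition twin_edges :: "'a set \<Rightarrow> ('a \<Rightarrow> 'a \<Rightarrow> bool) \<Rightarrow> 'a set \<Rightarrow> 'a set \<Rightarrow> bool" where
  "twin_edges V E X Y \<longleftrightarrow> X \<in> twin_vertices V E \<and> Y \<in> twin_vertices V E \<and> X \<noteq> Y
     \<and> (\<exists>u\<in>X. \<exists>v\<in>Y. E u v)"

end

theory Submission
  imports Defs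
begin

lemma gdist_le:
  assumes "walk_betw V E u xs v"
  shows "Suc (gdist V E u v) \<le> length xs"
proof -
  have ne: "xs \<noteq> []" using assms by (simp add: walk_betw_def)
  then have "length xs = Suc (length xs - 1)" by simp
  then have "\<exists>ys. walk_betw V E u ys v \<and> length ys = Suc (length xs - 1)" using assms by metis
  then have "gdist V E u v \<le> length xs - 1" unfolding gdist_def by (rule Least_le)
  then show ?thesis using ne by (cases xs) auto
qed

lemma gdist_ex:
  assumes "walk_betw V E u xs v"
  shows "\<exists>ys. walk_betw V E u ys v \<and> length ys = Suc (gdist V E u v)"
proof -
  have ne: "xs \<noteq> []" using assms by (simp add: walk_betw_def)
  then have "length xs = Suc (length xs - 1)" by simp
  then have "\<exists>n ys. walk_betw V E u ys v \<and> length ys = Suc n" using assms by metis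
  then show ?thesis unfolding gdist_def by (rule LeastI_ex)
qed

lemma gdist_0:
  assumes "walk_betw V E u xs v" "gdist V E u v = 0"
  shows "u = v"
proof -
  obtain ys where "walk_betw V E u ys v" "length ys = Suc 0" using gdist_ex[OF assms(1)] assms(2) by auto
  then show ?thesis by (cases ys) (auto simp: walk_betw_def)
qed

lemma gdist_self: "u \<in> V \<Longrightarrow> gdist V E u u = 0"
  using gdist_le[of V E u "[u]" u] by (simp add: walk_betw_def)

lemma twins_char:
  assumes "simple_graph V E"
  shows "twins V E u v \<longleftrightarrow> u \<noteq> v \<and> (\<forall>x. x \<noteq> u \<and> x \<noteq> v \<longrightarrow> (E u x \<longleftrightarrow> E v x))"
  using assms unfolding twins_def simple_graph_def by (auto simp: set_eq_iff)

lemma twins_sym: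
  assumes "simple_graph V E" "twins V E u v"
  shows "twins V E v u"
  using assms twins_char[OF assms(1)] by metis

lemma twins_trans:
  assumes g: "simple_graph V E" and "twins V E u v" "twins V E v w" "u \<noteq> w"
  shows "twins V E u w"
proof -
  have s: "\<And>a b. E a b \<Longrightarrow> E b a" using g by (simp add: simple_graph_def)
  have uv: "\<And>x. x \<noteq> u \<Longrightarrow> x \<noteq> v \<Longrightarrow> E u x = E v x" and "u \<noteq> v"
    using assms(2) twins_char[OF g] by auto
  have vw: "\<And>x. x \<noteq> v \<Longrightarrow> x \<noteq> w \<Longrightarrow> E v x = E w x" and "v \<noteq> w"
    using assms(3) twins_char[OF g] by auto
  have "\<forall>x. x \<noteq> u \<and> x \<noteq> w \<longrightarrow> (E u x \<longleftrightarrow> E w x)"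
  proof (intro allI impI)
    fix x assume x: "x \<noteq> u \<and> x \<noteq> w"
    show "E u x \<longleftrightarrow> E w x"
    proof (cases "x = v")
      case True
      have "E u v = E v u" using s by blast
      also have "\<dots> = E w u" using vw[of u] assms(4) \<open>u \<noteq> v\<close> by auto
      also have "\<dots> = E u w" using s by blast
      also have "\<dots> = E v w" using uv[of w] assms(4) \<open>v \<noteq> w\<close> by auto
      also have "\<dots> = E w v" using s by blast
      finally show ?thesis using True by simp
    next
      case False
      then show ?thesis using uv vw x by metis
    qed
  qed
  then show ?thesis using twins_char[OF g] assms(4) by blast
qed

lemma mem_class: "a \<in> V \<Longrightarrow> a \<in> twin_class V E a"
  by (simp add: twin_class_def)

lemma class_eq:
  assumes g: "simple_graph V E" and "x \<in> twin_class V E a"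
  shows "twin_class V E x = twin_class V E a"
proof -
  have xa: "x = a \<or> twins V E x a" and xV: "x \<in> V" using assms(2) by (auto simp: twin_class_def)
  show ?thesis
  proof (cases "x = a")
    case True then show ?thesis by simp
  next
    case False
    then have t: "twins V E x a" using xa by simp
    show ?thesis unfolding twin_class_def
    proof (intro Collect_cong conj_cong refl)
      fix y assume "y \<in> V"
      show "(y = x \<or> twins V E y x) = (y = a \<or> twins V E y a)"
        using t twins_sym[OF g] twins_trans[OF g]
        by (metis twins_def)
    qed
  qed
qed

lemma edge_class:
  assumes g: "simple_graph V E" and e: "E x y" and x': "x' \<in> twin_class V E x"
    and y': "y' \<in> twin_class V E y" and ne: "twin_class V E x \<noteq> twin_class V E y"
  shows "E x' y'"
proof -
  have s: "\<And>a b. E a b \<Longrightarrow> E b a" and irr: "\<And>a. \<not> E a a" using g by (auto simp: simple_graph_def)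
  have fx': "twin_class V E x' = twin_class V E x" using class_eq[OF g x'] .
  have fy': "twin_class V E y' = twin_class V E y" using class_eq[OF g y'] .
  have "E x' y"
  proof (cases "x' = x")
    case True then show ?thesis using e by simp
  next
    case False
    then have t: "twins V E x' x" using x' by (auto simp: twin_class_def)
    have "y \<noteq> x" using e irr by auto
    moreover have "y \<noteq> x'" using fx' ne by auto
    ultimately show ?thesis using t twins_char[OF g] e by blast
  qed
  show "E x' y'"
  proof (cases "y' = y")
    case True then show ?thesis using \<open>E x' y\<close> by simp
  next
    case False
    then have t: "twins V E y' y" using y' by (auto simp: twin_class_def)
    have "x' \<noteq> y" using \<open>E x' y\<close> irr by auto
    moreover have "x' \<noteq> y'" using fx' fy' ne by auto
    ultimately show ?thesis using t twins_char[OF g] s \<open>E x' y\<close> by blast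
  qed
qed

lemma remdups_adj_hd: "\<exists>r. remdups_adj (a # l) = a # r"
  by (metis remdups_adj_Cons_alt)

lemma proj_walk:
  assumes g: "simple_graph V E"
  shows "walk E xs \<Longrightarrow> set xs \<subseteq> V \<Longrightarrow>
    walk (twin_edges V E) (remdups_adj (map (twin_class V E) xs))"
proof (induction xs rule: induct_list012)
  case 1 then show ?case by simp
next
  case (2 x) then show ?case by simp
next
  case (3 x y xs)
  let ?f = "twin_class V E"
  have IH: "walk (twin_edges V E) (remdups_adj (map ?f (y # xs)))" using 3 by simp
  show ?case
  proof (cases "?f x = ?f y")
    case True then show ?thesis using IH by simp
  next
    case False
    obtain r where r: "remdups_adj (?f y # map ?f xs) = ?f y # r" using remdups_adj_hd[of "?f y" "map ?f xs"] by blast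
    have xV: "x \<in> V" and yV: "y \<in> V" using "3.prems"(2) by auto
    have "twin_edges V E (?f x) (?f y)"
      unfolding twin_edges_def twin_vertices_def
      using False "3.prems"(1) mem_class[OF xV, of E] mem_class[OF yV, of E] xV yV
      by auto
    then show ?thesis using IH r False by simp
  qed
qed

lemma lift_walk:
  assumes g: "simple_graph V E" and gY: "\<And>Y. Y \<in> twin_vertices V E \<Longrightarrow> g Y \<in> Y"
  shows "walk (twin_edges V E) ys \<Longrightarrow> walk E (map g ys)"
proof (induction "twin_edges V E" ys rule: walk.induct)
  case 1 then show ?case by simp
next
  case (2 x) then show ?case by simp
next
  case (3 X Y ys)
  have IH: "walk E (map g (Y # ys))" using 3 by simp
  have te: "twin_edges V E X Y" using 3 by simp
  then obtain a b where a: "a \<in> X" and b: "b \<in> Y" and ab: "E a b" and XV: "X \<in> twin_vertices V E"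
    and YV: "Y \<in> twin_vertices V E" and XY: "X \<noteq> Y"
    unfolding twin_edges_def by blast
  have Xa: "twin_class V E a = X" using XV a class_eq[OF g] unfolding twin_vertices_def by blast
  have Yb: "twin_class V E b = Y" using YV b class_eq[OF g] unfolding twin_vertices_def by blast
  have "E (g X) (g Y)" using edge_class[OF g ab, of "g X" "g Y"] Xa Yb gY XV YV XY by simp
  then show ?case using IH by simp
qed

lemma proj_betw:
  assumes g: "simple_graph V E" and w: "walk_betw V E u xs z"
  shows "walk_betw (twin_vertices V E) (twin_edges V E) (twin_class V E u)
           (remdups_adj (map (twin_class V E) xs)) (twin_class V E z)"
  using w proj_walk[OF g, of xs] unfolding walk_betw_def twin_vertices_def
  by (auto simp: hd_map last_map)

lemma dist_eq:
  assumes g: "simple_graph V E" and c: "connected_graph V E"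
    and u: "u \<in> V" and z: "z \<in> V" and ne: "twin_class V E u \<noteq> twin_class V E z"
  shows "gdist V E u z = gdist (twin_vertices V E) (twin_edges V E) (twin_class V E u) (twin_class V E z)"
proof -
  let ?f = "twin_class V E"
  let ?V = "twin_vertices V E" and ?E = "twin_edges V E"
  obtain xs0 where xs0: "walk_betw V E u xs0 z" using c u z by (auto simp: connected_graph_def)
  obtain xs where xs: "walk_betw V E u xs z" "length xs = Suc (gdist V E u z)"
    using gdist_ex[OF xs0] by blast
  let ?p = "remdups_adj (map ?f xs)"
  have pw: "walk_betw ?V ?E (?f u) ?p (?f z)"
    by (rule proj_betw[OF g xs(1)])
  have le1: "gdist ?V ?E (?f u) (?f z) \<le> gdist V E u z"
    using gdist_le[OF pw] remdups_adj_length[of "map ?f xs"] xs(2) by simp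
  obtain ys where ys: "walk_betw ?V ?E (?f u) ys (?f z)" "length ys = Suc (gdist ?V ?E (?f u) (?f z))"
    using gdist_ex[OF pw] by blast
  define h where "h Y = (if Y = ?f u then u else if Y = ?f z then z else (SOME y. y \<in> Y))" for Y
  have hY: "h Y \<in> Y" if YV: "Y \<in> ?V" for Y
  proof -
    obtain a where a: "a \<in> V" "Y = ?f a" using YV unfolding twin_vertices_def by blast
    have aY: "a \<in> Y" using a mem_class by metis
    show ?thesis
    proof (cases "Y = ?f u")
      case True then show ?thesis using mem_class[OF u] by (simp add: h_def)
    next
      case F1: False
      show ?thesis
      proof (cases "Y = ?f z")
        case True then show ?thesis using mem_class[OF z] F1 by (simp add: h_def)
      next
        case False
        have "(SOME y. y \<in> Y) \<in> Y" using aY by (rule someI)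
        then show ?thesis using F1 False by (simp add: h_def)
      qed
    qed
  qed
  have hV: "h Y \<in> V" if YV: "Y \<in> ?V" for Y
  proof -
    obtain a where a: "Y = ?f a" using YV unfolding twin_vertices_def by blast
    have "?f a \<subseteq> V" by (auto simp: twin_class_def)
    then show ?thesis using hY[OF YV] a by blast
  qed
  have ys1: "ys \<noteq> []" "hd ys = ?f u" "last ys = ?f z" "set ys \<subseteq> ?V" "walk ?E ys"
    using ys(1) unfolding walk_betw_def by auto
  have "h (?f u) = u" by (simp add: h_def)
  moreover have "h (?f z) = z" using ne by (simp add: h_def)
  moreover have "set (map h ys) \<subseteq> V" using ys1(4) hV by auto
  moreover have "walk E (map h ys)" using lift_walk[OF g hY ys1(5)] by blast
  ultimately have "walk_betw V E u (map h ys) z"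
    unfolding walk_betw_def using ys1(1,2,3) by (simp add: hd_map last_map)
  then have "gdist V E u z \<le> gdist ?V ?E (?f u) (?f z)"
    using gdist_le ys(2) by fastforce
  then show ?thesis using le1 by simp
qed

theorem proposition2p8:
  fixes V :: "'a set" and E :: "'a \<Rightarrow> 'a \<Rightarrow> bool" and t :: nat
  assumes "simple_graph V E" and "connected_graph V E" and "0 < t"
    and "int (metric_dim (twin_vertices V E) (twin_edges V E)) = int (card (twin_vertices V E)) - int t"
  shows "int (metric_dim V E) \<le> int (card V) - int t"
proof -
  note g = assms(1) and c = assms(2)
  let ?f = "twin_class V E"
  let ?V = "twin_vertices V E" and ?E = "twin_edges V E"
  have finV: "finite V" using g by (simp add: simple_graph_def)
  have fin: "finite ?V" using finV unfolding twin_vertices_def by simp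
  have walkex: "\<exists>xs. walk_betw ?V ?E X xs Y" if XYV: "X \<in> ?V" "Y \<in> ?V" for X Y
  proof -
    obtain a b where a: "a \<in> V" "X = ?f a" and b: "b \<in> V" "Y = ?f b"
      using XYV unfolding twin_vertices_def by blast
    obtain xs where "walk_betw V E a xs b" using c a b by (auto simp: connected_graph_def)
    then show ?thesis using proj_betw[OF g] a b by blast
  qed
  have "resolving ?V ?E ?V"
    unfolding resolving_def
  proof (intro conjI ballI impI subset_refl)
    fix X Y assume XY: "X \<in> ?V" "Y \<in> ?V" and d: "\<forall>w\<in>?V. gdist ?V ?E X w = gdist ?V ?E Y w"
    then have "gdist ?V ?E X Y = 0" using gdist_self[of Y ?V ?E] by simp
    then show "X = Y" using walkex[OF XY] gdist_0 by metis
  qed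
  then have "\<exists>k W. resolving ?V ?E W \<and> card W = k" by blast
  then have "\<exists>W. resolving ?V ?E W \<and> card W = metric_dim ?V ?E"
    unfolding metric_dim_def by (rule LeastI_ex)
  then obtain Ws where Ws: "resolving ?V ?E Ws" "card Ws = metric_dim ?V ?E" by blast
  have WsV: "Ws \<subseteq> ?V" using Ws(1) by (simp add: resolving_def)
  define r where "r X = (SOME x. x \<in> X)" for X :: "'a set"
  have rX: "r X \<in> X" and frX: "?f (r X) = X" if XV: "X \<in> ?V" for X
  proof -
    obtain a where a: "a \<in> V" "X = ?f a" using XV unfolding twin_vertices_def by blast
    then have "a \<in> X" using mem_class by metis
    then show "r X \<in> X" unfolding r_def by (rule someI)
    then show "?f (r X) = X" using class_eq[OF g] a by metis
  qed
  have rV: "r X \<in> V" if "X \<in> ?V" for X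
    using rX[OF that] that unfolding twin_vertices_def twin_class_def by auto
  have inj: "inj_on r ?V" by (metis frX inj_onI)
  define W where "W = V - r ` (?V - Ws)"
  have sub: "r ` (?V - Ws) \<subseteq> V" using rV by blast
  have cardD: "card (?V - Ws) = t"
    using assms(4) Ws(2) card_Diff_subset[OF finite_subset[OF WsV fin] WsV] card_mono[OF fin WsV] by simp
  have cardW: "card W = card V - t"
    unfolding W_def using card_Diff_subset[OF finite_subset[OF sub finV] sub]
      card_image[OF inj_on_subset[OF inj, of "?V - Ws"]] cardD by auto
  have tle: "t \<le> card V"
    using card_mono[OF finV sub] card_image[OF inj_on_subset[OF inj, of "?V - Ws"]] cardD by auto
  have res: "resolving V E W"
    unfolding resolving_def
  proof (intro conjI ballI impI)
    show "W \<subseteq> V" unfolding W_def by blast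
  next
    fix u v assume u: "u \<in> V" and v: "v \<in> V" and d: "\<forall>w\<in>W. gdist V E u w = gdist V E v w"
    have conn: "\<exists>xs. walk_betw V E a xs b" if "a \<in> V" "b \<in> V" for a b
      using c that by (auto simp: connected_graph_def)
    show "u = v"
    proof (rule ccontr)
      assume uv: "u \<noteq> v"
      have uW: "u \<notin> W"
      proof
        assume "u \<in> W"
        then have "gdist V E v u = 0" using d gdist_self[OF u] by metis
        then show False using conn[OF v u] gdist_0 uv by metis
      qed
      have vW: "v \<notin> W"
      proof
        assume "v \<in> W"
        then have "gdist V E u v = 0" using d gdist_self[OF v] by metis
        then show False using conn[OF u v] gdist_0 uv by metis
      qed
      obtain X where X: "X \<in> ?V - Ws" "u = r X" using uW u unfolding W_def by blast
      obtain Y where Y: "Y \<in> ?V - Ws" "v = r Y" using vW v unfolding W_def by blast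
      have fu: "?f u = X" using X frX by blast
      have fv: "?f v = Y" using Y frX by blast
      have "X \<noteq> Y" using X(2) Y(2) uv by auto
      then obtain Z where Z: "Z \<in> Ws" "gdist ?V ?E X Z \<noteq> gdist ?V ?E Y Z"
        using Ws(1) X Y unfolding resolving_def by blast
      have ZV: "Z \<in> ?V" using Z WsV by blast
      have zW: "r Z \<in> W"
      proof -
        have "r Z \<notin> r ` (?V - Ws)"
        proof
          assume "r Z \<in> r ` (?V - Ws)"
          then obtain Q where Q: "Q \<in> ?V - Ws" "r Z = r Q" by blast
          then have "Z = Q" using inj_onD[OF inj Q(2) ZV] by blast
          then show False using Q(1) Z(1) by blast
        qed
        then show ?thesis unfolding W_def using rV[OF ZV] by blast
      qed
      have fz: "?f (r Z) = Z" using frX[OF ZV] .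
      have XZ: "X \<noteq> Z" using X(1) Z(1) by blast
      have YZ: "Y \<noteq> Z" using Y(1) Z(1) by blast
      have e1: "gdist V E u (r Z) = gdist ?V ?E (?f u) (?f (r Z))"
        by (rule dist_eq[OF g c u rV[OF ZV]]) (simp only: fu fz XZ, simp)
      have e2: "gdist V E v (r Z) = gdist ?V ?E (?f v) (?f (r Z))"
        by (rule dist_eq[OF g c v rV[OF ZV]]) (simp only: fv fz YZ, simp)
      have "gdist V E u (r Z) = gdist ?V ?E X Z" "gdist V E v (r Z) = gdist ?V ?E Y Z"
        using e1 e2 unfolding fu fv fz by auto
      then show False using d zW Z(2) by metis
    qed
  qed
  have "metric_dim V E \<le> card W"
    unfolding metric_dim_def using res by (intro Least_le) blast
  then show ?thesis using cardW tle by simp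
qed

end
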